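(* Let $X$ have the Cauchy distribution with location $\mu\in\mathbb{R}$ and scale $\sigma>0$, i.e. density $\frac1\sigma f_0\big(\frac{x-\mu}{\sigma}\big)$ with $f_0(z)=\frac{1}{\pi(1+z^2)}$, and let $F_0$ be the CDF of $f_0$. For $c>1$, the unique positive root of $\frac{f_0(\frac{c}{c+1}\theta)}{f_0(\frac{c}{c-1}\theta)}=\frac{c+1}{c-1}$ is $\theta(c)=\frac{\sqrt{c^2-1}}{c}$, and the infimum coverage $$\psi(c)=\inf_{\mu,\sigma}P_{\mu,\sigma}\big(X-c|X|\le\mu\le X+c|X|\big)= F_0\Big(\frac{c}{c+1}\theta(c)\Big)+1-F_0\Big(\frac{c}{c-1}\theta(c)\Big)$$ is continuous in $c$ and satisfies $\psi(c)\to 1/2$ as $c\downarrow 1$ and $\psi(c)\to1$ as $c\to\infty$. Consequently, for every $\alpha$ with $0<\alpha<1/2$ there exists $c=c(\alpha)>1$ such that $\inf_{\mu\in\mathbb{R},\sigma>0}P_{\mu,\sigma}\big(X-c|X|\le\mu\le X+c|X|\big)=1-\alpha$. *)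

theory Defs
  imports "HOL-Probability.Probability"
begin

definition f0 :: "real \<Rightarrow> real" where
  "f0 z = 1 / (pi * (1 + z^2))"

definition std_cauchy :: "real measure" where
  "std_cauchy = density lborel (\<lambda>z. ennreal (f0 z))"

definition F0 :: "real \<Rightarrow> real" where
  "F0 z = cdf std_cauchy z"

definition cauchy_dist :: "real \<Rightarrow> real \<Rightarrow> real measure" where
  "cauchy_dist \<mu> \<sigma> = density lborel (\<lambda>x. ennreal (f0 ((x - \<mu>) / \<sigma>) / \<sigma>))"

definition coverage :: "real \<Rightarrow> real \<Rightarrow> real \<Rightarrow> real" where
  "coverage c \<mu> \<sigma> = measure (cauchy_dist \<mu> \<sigma>) {x. x - c * \<bar>x\<bar> \<le> \<mu> \<and> \<mu> \<le> x + c * \<bar>x\<bar>}"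

definition inf_coverage :: "real \<Rightarrow> real" where
  "inf_coverage c = (INF p \<in> (UNIV :: real set) \<times> {0<..}. coverage c (fst p) (snd p))"

definition theta :: "real \<Rightarrow> real" where
  "theta c = sqrt (c^2 - 1) / c"

definition psi :: "real \<Rightarrow> real" where
  "psi c = F0 (c / (c + 1) * theta c) + 1 - F0 (c / (c - 1) * theta c)"

end

theory Submission
  imports Defs
begin


definition G :: "real \<Rightarrow> real \<Rightarrow> real \<Rightarrow> real" where
  "G \<mu> \<sigma> x = arctan ((x - \<mu>) / \<sigma>) / pi"

lemma dens_meas[measurable]: "(\<lambda>x. ennreal (f0 ((x - \<mu>) / \<sigma>) / \<sigma>)) \<in> borel_measurable borel"
  unfolding f0_def by measurable

lemma sets_cd[simp, measurable_cong]: "sets (cauchy_dist \<mu> \<sigma>) = sets borel"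
  by (simp add: cauchy_dist_def)

lemma deriv_G:
  assumes "\<sigma> > 0"
  shows "DERIV (G \<mu> \<sigma>) x :> f0 ((x - \<mu>) / \<sigma>) / \<sigma>"
proof -
  have p: "1 + ((x - \<mu>) / \<sigma>)^2 > 0" by (simp add: add_pos_nonneg)
  have "DERIV (\<lambda>x. arctan ((x - \<mu>) / \<sigma>) / pi) x :> inverse (1 + ((x - \<mu>) / \<sigma>)^2) * (1 / \<sigma>) / pi"
    using assms by (auto intro!: derivative_eq_intros)
  moreover have "inverse (1 + ((x - \<mu>) / \<sigma>)^2) * (1 / \<sigma>) / pi = f0 ((x - \<mu>) / \<sigma>) / \<sigma>"
    unfolding f0_def using p assms by (simp add: field_simps)
  ultimately show ?thesis unfolding G_def by simp
qed

lemma emeasure_atLeast: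
  assumes "\<sigma> > 0"
  shows "emeasure (cauchy_dist \<mu> \<sigma>) {a..} = ennreal (1/2 - G \<mu> \<sigma> a)"
proof -
  have "emeasure (cauchy_dist \<mu> \<sigma>) {a..} = (\<integral>\<^sup>+x. ennreal (f0 ((x - \<mu>) / \<sigma>) / \<sigma>) * indicator {a..} x \<partial>lborel)"
    unfolding cauchy_dist_def by (subst emeasure_density) auto
  also have "\<dots> = ennreal (1/2 - G \<mu> \<sigma> a)"
  proof (rule nn_integral_FTC_atLeast)
    show "(\<lambda>x. f0 ((x - \<mu>) / \<sigma>) / \<sigma>) \<in> borel_measurable borel" unfolding f0_def by measurable
    show "DERIV (G \<mu> \<sigma>) x :> f0 ((x - \<mu>) / \<sigma>) / \<sigma>" for x using deriv_G assms .
    show "0 \<le> f0 ((x - \<mu>) / \<sigma>) / \<sigma>" for x using assms unfolding f0_def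
      by (auto intro!: divide_nonneg_pos add_pos_nonneg)
    show "(G \<mu> \<sigma> \<longlongrightarrow> 1/2) at_top"
      unfolding G_def
    proof -
      have l: "filterlim (\<lambda>x. (x - \<mu>) / \<sigma>) at_top at_top"
        unfolding filterlim_at_top eventually_at_top_linorder
      proof
        fix Z show "\<exists>N. \<forall>x\<ge>N. Z \<le> (x - \<mu>) / \<sigma>"
          using assms by (intro exI[of _ "\<mu> + \<sigma> * Z"]) (auto simp: field_simps)
      qed
      have "((\<lambda>x. arctan ((x - \<mu>) / \<sigma>)) \<longlongrightarrow> pi/2) at_top"
        by (rule filterlim_compose[OF tendsto_arctan_at_top l])
      from tendsto_divide[OF this tendsto_const[of pi]]
      show "((\<lambda>x. arctan ((x - \<mu>) / \<sigma>) / pi) \<longlongrightarrow> 1/2) at_top"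
        by simp
    qed
  qed
  finally show ?thesis .
qed

lemma G_bounds: "\<sigma> > 0 \<Longrightarrow> -1/2 < G \<mu> \<sigma> x \<and> G \<mu> \<sigma> x < 1/2"
  unfolding G_def using arctan_bounded[of "(x - \<mu>) / \<sigma>"] pi_gt_zero
  by (auto simp: field_simps)

lemma prob_cd:
  assumes "\<sigma> > 0"
  shows "prob_space (cauchy_dist \<mu> \<sigma>)"
proof
  let ?A = "\<lambda>i::nat. {- real i..}"
  have "(\<lambda>i. emeasure (cauchy_dist \<mu> \<sigma>) (?A i)) \<longlonglongrightarrow> emeasure (cauchy_dist \<mu> \<sigma>) (\<Union>i. ?A i)"
    by (rule Lim_emeasure_incseq) (auto simp: incseq_def)
  moreover have "(\<Union>i. ?A i) = UNIV"
  proof (intro set_eqI iffI)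
    fix x :: real
    obtain n :: nat where "- x \<le> real n" using real_arch_simple by blast
    then show "x \<in> (\<Union>i. ?A i)" by (intro UN_I[of n]) auto
  qed auto
  moreover have "(\<lambda>i. emeasure (cauchy_dist \<mu> \<sigma>) (?A i)) \<longlonglongrightarrow> ennreal 1"
  proof -
    have l: "filterlim (\<lambda>i::nat. (- real i - \<mu>) / \<sigma>) at_bot sequentially"
      unfolding filterlim_at_bot eventually_sequentially
    proof
      fix Z
      obtain n :: nat where "n \<ge> - \<mu> - \<sigma> * Z" using real_arch_simple by blast
      then show "\<exists>N. \<forall>i\<ge>N. (- real i - \<mu>) / \<sigma> \<le> Z"
        using assms by (intro exI[of _ n]) (auto simp: field_simps)
    qed
    have "(\<lambda>i::nat. arctan ((- real i - \<mu>) / \<sigma>)) \<longlonglongrightarrow> - (pi/2)"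
      by (rule filterlim_compose[OF tendsto_arctan_at_bot l])
    from tendsto_diff[OF tendsto_const[of "1/2"] tendsto_divide[OF this tendsto_const[of pi]]]
    have "(\<lambda>i::nat. 1/2 - G \<mu> \<sigma> (- real i)) \<longlonglongrightarrow> 1"
      unfolding G_def by simp
    from tendsto_ennrealI[OF this] show ?thesis
      using emeasure_atLeast[OF assms] by simp
  qed
  ultimately have "emeasure (cauchy_dist \<mu> \<sigma>) UNIV = ennreal 1"
    using LIMSEQ_unique by metis
  then show "emeasure (cauchy_dist \<mu> \<sigma>) (space (cauchy_dist \<mu> \<sigma>)) = 1"
    by (simp add: cauchy_dist_def)
qed

lemma measure_atLeast:
  assumes "\<sigma> > 0"
  shows "measure (cauchy_dist \<mu> \<sigma>) {a..} = 1/2 - G \<mu> \<sigma> a"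
  using emeasure_atLeast[OF assms] G_bounds[OF assms, of \<mu> a]
  by (simp add: measure_def)

lemma emeasure_single:
  "emeasure (cauchy_dist \<mu> \<sigma>) {a} = 0"
proof -
  have "emeasure (cauchy_dist \<mu> \<sigma>) {a} = (\<integral>\<^sup>+x. ennreal (f0 ((x - \<mu>) / \<sigma>) / \<sigma>) * indicator {a} x \<partial>lborel)"
    unfolding cauchy_dist_def by (subst emeasure_density) auto
  also have "\<dots> = 0"
    by (rule nn_integral_null_set) (simp add: null_sets_def)
  finally show ?thesis .
qed

lemma measure_atMost:
  assumes "\<sigma> > 0"
  shows "measure (cauchy_dist \<mu> \<sigma>) {..a} = 1/2 + G \<mu> \<sigma> a"
proof -
  interpret prob_space "cauchy_dist \<mu> \<sigma>" by (rule prob_cd[OF assms])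
  have sp: "space (cauchy_dist \<mu> \<sigma>) = UNIV" by (simp add: cauchy_dist_def)
  have "measure (cauchy_dist \<mu> \<sigma>) {a<..} = measure (cauchy_dist \<mu> \<sigma>) ({a..} - {a})"
    by (intro arg_cong[where f="measure _"]) auto
  also have "\<dots> = measure (cauchy_dist \<mu> \<sigma>) {a..} - measure (cauchy_dist \<mu> \<sigma>) {a}"
    by (rule finite_measure_Diff) auto
  also have "measure (cauchy_dist \<mu> \<sigma>) {a} = 0"
    using emeasure_single by (simp add: measure_def)
  finally have 1: "measure (cauchy_dist \<mu> \<sigma>) {a<..} = 1/2 - G \<mu> \<sigma> a"
    using measure_atLeast[OF assms] by simp
  have "{..a} = space (cauchy_dist \<mu> \<sigma>) - {a<..}" using sp by auto
  then have "measure (cauchy_dist \<mu> \<sigma>) {..a} = 1 - measure (cauchy_dist \<mu> \<sigma>) {a<..}"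
    by (simp add: prob_compl)
  with 1 show ?thesis by simp
qed

lemma F0_eq: "F0 z = 1/2 + arctan z / pi"
proof -
  have "std_cauchy = cauchy_dist 0 1" unfolding std_cauchy_def cauchy_dist_def by simp
  then show ?thesis unfolding F0_def cdf_def using measure_atMost[of 1 0 z] by (simp add: G_def)
qed




lemma arctan_diff:
  assumes "x \<ge> 0" "y \<ge> 0"
  shows "arctan x - arctan y = arctan ((x - y) / (1 + x * y))"
proof -
  define A where "A = arctan x"
  define B where "B = arctan y"
  have A: "0 \<le> A" "A < pi/2" using arctan_bounded[of x] assms unfolding A_def by auto
  have B: "0 \<le> B" "B < pi/2" using arctan_bounded[of y] assms unfolding B_def by auto
  have c: "cos (A - B) \<noteq> 0"
    using cos_gt_zero_pi[of "A - B"] A B by auto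
  have "tan (A - B) = (tan A - tan B) / (1 + tan A * tan B)"
    by (rule tan_diff) (use c in \<open>auto simp: A_def B_def\<close>)
  then have "tan (A - B) = (x - y) / (1 + x * y)"
    by (simp add: A_def B_def tan_arctan)
  then have "arctan ((x - y) / (1 + x * y)) = arctan (tan (A - B))" by simp
  also have "\<dots> = A - B" using A B by (intro arctan_tan) auto
  finally show ?thesis by (simp add: A_def B_def)
qed

lemma key_diff:
  fixes c t :: real
  assumes "c > 1" "t \<ge> 0"
  shows "arctan (c / (c - 1) * t) - arctan (c / (c + 1) * t) = arctan (2 * c * t / (c^2 - 1 + c^2 * t^2))"
proof -
  have "arctan (c / (c - 1) * t) - arctan (c / (c + 1) * t)
     = arctan ((c / (c - 1) * t - c / (c + 1) * t) / (1 + (c / (c - 1) * t) * (c / (c + 1) * t)))"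
    using assms by (intro arctan_diff) auto
  also have "(c / (c - 1) * t - c / (c + 1) * t) / (1 + (c / (c - 1) * t) * (c / (c + 1) * t))
      = 2 * c * t / (c^2 - 1 + c^2 * t^2)"
  proof -
    have p1: "c - 1 > 0" "c + 1 > 0" using assms by auto
    have c2: "c^2 - 1 > 0" using one_less_power[OF assms(1), of 2] by simp
    have cc: "c^2 - 1 = (c - 1) * (c + 1)" by (simp add: power2_eq_square algebra_simps)
    have p2: "c^2 - 1 + c^2 * t^2 > 0" using c2 by (intro add_pos_nonneg) auto
    have num: "c / (c - 1) * t - c / (c + 1) * t = 2 * c * t / (c^2 - 1)"
      using p1 unfolding cc by (simp add: field_simps)
    have den: "1 + (c / (c - 1) * t) * (c / (c + 1) * t) = (c^2 - 1 + c^2 * t^2) / (c^2 - 1)"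
    proof -
      have m: "(c / (c - 1) * t) * (c / (c + 1) * t) = c^2 * t^2 / (c^2 - 1)"
        unfolding cc by (simp add: power2_eq_square)
      show ?thesis unfolding m using c2 by (simp add: add_divide_distrib)
    qed
    show ?thesis unfolding num den using c2 p2 by simp

  qed
  finally show ?thesis .
qed

lemma key_bound:
  fixes c t :: real
  assumes "c > 1" "t \<ge> 0"
  shows "2 * c * t / (c^2 - 1 + c^2 * t^2) \<le> 1 / sqrt (c^2 - 1)"
proof -
  define s where "s = sqrt (c^2 - 1)"
  have s2: "s^2 = c^2 - 1" using assms unfolding s_def by (simp add: one_less_power less_imp_le)
  have sp: "s > 0" unfolding s_def using assms by (simp add: one_less_power)
  have c2: "c^2 - 1 > 0" using one_less_power[OF assms(1), of 2] by simp
  have d: "c^2 - 1 + c^2 * t^2 > 0" using c2 by (intro add_pos_nonneg) auto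
  have e: "(s - c * t)^2 = s^2 + c^2 * t^2 - 2 * c * t * s" by (simp add: power2_diff power_mult_distrib algebra_simps)
  have "2 * c * t * s \<le> s^2 + c^2 * t^2"
    using zero_le_power2[of "s - c * t"] unfolding e by linarith
  then have "2 * c * t * s \<le> c^2 - 1 + c^2 * t^2" using s2 by simp
  then show ?thesis using d sp unfolding s_def[symmetric] by (simp add: field_simps)
qed

lemma key_theta:
  fixes c :: real
  assumes "c > 1"
  shows "2 * c * theta c / (c^2 - 1 + c^2 * (theta c)^2) = 1 / sqrt (c^2 - 1)"
proof -
  define s where "s = sqrt (c^2 - 1)"
  have s2: "s^2 = c^2 - 1" using assms unfolding s_def by (simp add: one_less_power less_imp_le)
  have sp: "s > 0" unfolding s_def using assms by (simp add: one_less_power)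
  have th: "theta c = s / c" unfolding theta_def s_def ..
  have "c^2 * (theta c)^2 = s^2" using assms by (simp add: th power_divide)
  moreover have "c*c > 1*1" using assms by (intro mult_strict_mono) auto
  moreover have "s * s > 0" using sp by simp
  ultimately show ?thesis using sp s2 assms unfolding s_def[symmetric] th
    by (simp add: field_simps power2_eq_square)
qed




lemma cov_split:
  assumes "c > 1" "\<sigma> > 0" "l < u"
    and S: "{x. x - c * \<bar>x\<bar> \<le> \<mu> \<and> \<mu> \<le> x + c * \<bar>x\<bar>} = {..l} \<union> {u..}"
  shows "coverage c \<mu> \<sigma> = 1 + G \<mu> \<sigma> l - G \<mu> \<sigma> u"
proof -
  interpret prob_space "cauchy_dist \<mu> \<sigma>" by (rule prob_cd[OF assms(2)])
  have "coverage c \<mu> \<sigma> = measure (cauchy_dist \<mu> \<sigma>) ({..l} \<union> {u..})"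
    unfolding coverage_def S ..
  also have "\<dots> = measure (cauchy_dist \<mu> \<sigma>) {..l} + measure (cauchy_dist \<mu> \<sigma>) {u..}"
    using assms(3) by (intro finite_measure_Union) auto
  finally show ?thesis using measure_atMost[OF assms(2)] measure_atLeast[OF assms(2)] by simp
qed

lemma cov_formula:
  assumes c: "c > 1" and s: "\<sigma> > 0"
  shows "coverage c \<mu> \<sigma> = 1 - (arctan (c / (c - 1) * \<bar>\<mu> / \<sigma>\<bar>) - arctan (c / (c + 1) * \<bar>\<mu> / \<sigma>\<bar>)) / pi"
proof -
  have p1: "c - 1 > 0" "c + 1 > 0" using c by auto
  consider "\<mu> > 0" | "\<mu> < 0" | "\<mu> = 0" by linarith
  then show ?thesis
  proof cases
    case 1
    have S: "{x. x - c * \<bar>x\<bar> \<le> \<mu> \<and> \<mu> \<le> x + c * \<bar>x\<bar>} = {..- \<mu> / (c - 1)} \<union> {\<mu> / (c + 1)..}"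
    proof (intro set_eqI)
      fix x :: real
      show "x \<in> {x. x - c * \<bar>x\<bar> \<le> \<mu> \<and> \<mu> \<le> x + c * \<bar>x\<bar>} \<longleftrightarrow> x \<in> {..- \<mu> / (c - 1)} \<union> {\<mu> / (c + 1)..}"
      proof (cases "x \<ge> 0")
        case True
        have l: "- \<mu> / (c - 1) < 0" using 1 p1 by (simp add: divide_neg_pos)
        have A: "x - c * \<bar>x\<bar> \<le> \<mu>" 
        proof -
          have "1 * x \<le> c * x" using True c by (intro mult_right_mono) auto
          then show ?thesis using True 1 by simp
        qed
        have B: "(\<mu> \<le> x + c * \<bar>x\<bar>) \<longleftrightarrow> \<mu> / (c + 1) \<le> x"
          using True p1 by (simp add: pos_divide_le_eq algebra_simps)
        show ?thesis using A B l True by auto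
      next
        case False
        have l: "\<mu> / (c + 1) > 0" using 1 p1 by simp
        have A: "x - c * \<bar>x\<bar> \<le> \<mu>" 
        proof -
          have "c * x < 0" using False c by (intro mult_pos_neg) auto
          then show ?thesis using False 1 by simp
        qed
        have B0: "x \<le> - \<mu> / (c - 1) \<longleftrightarrow> x * (c - 1) \<le> - \<mu>" by (rule pos_le_divide_eq[OF p1(1)])
        have B: "(\<mu> \<le> x + c * \<bar>x\<bar>) \<longleftrightarrow> x \<le> - \<mu> / (c - 1)"
          unfolding B0 using False by (simp add: algebra_simps)
        show ?thesis using A B l False by auto
      qed
    qed
    have lu: "- \<mu> / (c - 1) < \<mu> / (c + 1)" using 1 p1
      by (smt (verit) divide_neg_pos divide_pos_pos)
    have e1: "(- \<mu> / (c - 1) - \<mu>) / \<sigma> = - (c / (c - 1) * \<bar>\<mu> / \<sigma>\<bar>)"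
      using 1 p1 s by (simp add: field_simps)
    have e2: "(\<mu> / (c + 1) - \<mu>) / \<sigma> = - (c / (c + 1) * \<bar>\<mu> / \<sigma>\<bar>)"
      using 1 p1 s by (simp add: field_simps)
    show ?thesis using cov_split[OF c s lu S] unfolding G_def e1 e2 arctan_minus
      by (simp add: field_simps)
  next
    case 2
    have S: "{x. x - c * \<bar>x\<bar> \<le> \<mu> \<and> \<mu> \<le> x + c * \<bar>x\<bar>} = {..\<mu> / (c + 1)} \<union> {- \<mu> / (c - 1)..}"
    proof (intro set_eqI)
      fix x :: real
      show "x \<in> {x. x - c * \<bar>x\<bar> \<le> \<mu> \<and> \<mu> \<le> x + c * \<bar>x\<bar>} \<longleftrightarrow> x \<in> {..\<mu> / (c + 1)} \<union> {- \<mu> / (c - 1)..}"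
      proof (cases "x \<ge> 0")
        case True
        have l: "\<mu> / (c + 1) < 0" using 2 p1 by (simp add: divide_neg_pos)
        have A: "\<mu> \<le> x + c * \<bar>x\<bar>"
        proof -
          have "0 \<le> c * x" using True c by simp
          then show ?thesis using True 2 by simp
        qed
        have B0: "- \<mu> / (c - 1) \<le> x \<longleftrightarrow> - \<mu> \<le> x * (c - 1)" by (rule pos_divide_le_eq[OF p1(1)])
        have B: "(x - c * \<bar>x\<bar> \<le> \<mu>) \<longleftrightarrow> - \<mu> / (c - 1) \<le> x"
          unfolding B0 using True by (simp add: algebra_simps)
        show ?thesis using A B l True by auto
      next
        case False
        have l: "- \<mu> / (c - 1) > 0" using 2 p1 by (simp add: divide_neg_pos)
        have A: "\<mu> \<le> x + c * \<bar>x\<bar>"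
        proof -
          have "1 * x \<ge> c * x" using False c by (intro mult_right_mono_neg) auto
          moreover have "c * \<bar>x\<bar> = - (c * x)" using False by simp
          ultimately show ?thesis using False 2 by linarith
        qed
        have B0: "x \<le> \<mu> / (c + 1) \<longleftrightarrow> x * (c + 1) \<le> \<mu>" by (rule pos_le_divide_eq[OF p1(2)])
        have B: "(x - c * \<bar>x\<bar> \<le> \<mu>) \<longleftrightarrow> x \<le> \<mu> / (c + 1)"
          unfolding B0 using False by (simp add: algebra_simps)
        show ?thesis using A B l False by auto
      qed
    qed
    have lu: "\<mu> / (c + 1) < - \<mu> / (c - 1)" using 2 p1
      by (smt (verit) divide_neg_pos divide_pos_pos)
    have e1: "(\<mu> / (c + 1) - \<mu>) / \<sigma> = c / (c + 1) * \<bar>\<mu> / \<sigma>\<bar>"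
      using 2 p1 s by (simp add: field_simps)
    have e2: "(- \<mu> / (c - 1) - \<mu>) / \<sigma> = c / (c - 1) * \<bar>\<mu> / \<sigma>\<bar>"
      using 2 p1 s by (simp add: field_simps)
    show ?thesis using cov_split[OF c s lu S] unfolding G_def e1 e2
      by (simp add: diff_divide_distrib)
  next
    case 3
    interpret prob_space "cauchy_dist \<mu> \<sigma>" by (rule prob_cd[OF s])
    have S: "{x. x - c * \<bar>x\<bar> \<le> \<mu> \<and> \<mu> \<le> x + c * \<bar>x\<bar>} = space (cauchy_dist \<mu> \<sigma>)"
    proof -
      have "x - c * \<bar>x\<bar> \<le> 0 \<and> 0 \<le> x + c * \<bar>x\<bar>" for x :: real
      proof -
        have "1 * \<bar>x\<bar> \<le> c * \<bar>x\<bar>" using c by (intro mult_right_mono) auto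
        moreover have "- \<bar>x\<bar> \<le> x" "x \<le> \<bar>x\<bar>" by auto
        ultimately show ?thesis by linarith
      qed
      then show ?thesis using 3 by (auto simp: cauchy_dist_def)
    qed
    show ?thesis unfolding coverage_def S using prob_space.prob_space[OF prob_cd[OF s, of \<mu>]] 3 by simp
  qed
qed




lemma psi_eq:
  assumes c: "c > 1"
  shows "psi c = 1 - arctan (1 / sqrt (c^2 - 1)) / pi"
proof -
  have tp: "theta c > 0" unfolding theta_def using c by (simp add: one_less_power)
  have "psi c = 1 - (arctan (c / (c - 1) * theta c) - arctan (c / (c + 1) * theta c)) / pi"
    unfolding psi_def F0_eq by (simp add: diff_divide_distrib)
  also have "\<dots> = 1 - arctan (1 / sqrt (c^2 - 1)) / pi"
    unfolding key_diff[OF c less_imp_le[OF tp]] key_theta[OF c] ..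
  finally show ?thesis .
qed

lemma cov_ge:
  assumes c: "c > 1" and s: "\<sigma> > 0"
  shows "psi c \<le> coverage c \<mu> \<sigma>"
proof -
  have "coverage c \<mu> \<sigma> = 1 - arctan (2 * c * \<bar>\<mu> / \<sigma>\<bar> / (c^2 - 1 + c^2 * \<bar>\<mu> / \<sigma>\<bar>^2)) / pi"
    unfolding cov_formula[OF c s] key_diff[OF c abs_ge_zero] ..
  moreover have "arctan (2 * c * \<bar>\<mu> / \<sigma>\<bar> / (c^2 - 1 + c^2 * \<bar>\<mu> / \<sigma>\<bar>^2)) \<le> arctan (1 / sqrt (c^2 - 1))"
    by (rule arctan_monotone'[OF key_bound[OF c abs_ge_zero]])
  ultimately show ?thesis unfolding psi_eq[OF c] using pi_gt_zero by (simp add: divide_right_mono)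
qed

lemma cov_attain:
  assumes c: "c > 1"
  shows "coverage c (theta c) 1 = psi c"
proof -
  have tp: "theta c > 0" unfolding theta_def using c by (simp add: one_less_power)
  show ?thesis
    unfolding cov_formula[OF c zero_less_one] psi_eq[OF c] using tp
    unfolding div_by_1 abs_of_pos[OF tp] key_diff[OF c less_imp_le[OF tp]] key_theta[OF c] by simp
qed

lemma inf_cov:
  assumes c: "c > 1"
  shows "inf_coverage c = psi c"
proof -
  have bdd: "bdd_below ((\<lambda>p. coverage c (fst p) (snd p)) ` (UNIV \<times> {0<..}))"
    using cov_ge[OF c] by (auto intro!: bdd_belowI[of _ "psi c"])
  have "inf_coverage c \<le> coverage c (theta c) 1"
    unfolding inf_coverage_def using cINF_lower[OF bdd, of "(theta c, 1)"] by simp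
  moreover have "psi c \<le> inf_coverage c"
    unfolding inf_coverage_def using cov_ge[OF c] by (intro cINF_greatest) auto
  ultimately show ?thesis using cov_attain[OF c] by simp
qed

lemma psi_cont: "continuous_on {1<..} psi"
proof -
  have "continuous_on {1<..} (\<lambda>c::real. 1 - arctan (1 / sqrt (c^2 - 1)) / pi)"
  proof (intro continuous_intros ballI)
    fix c :: real assume "c \<in> {1<..}"
    then have "c^2 > 1" using one_less_power[of c 2] by simp
    then show "sqrt (c^2 - 1) \<noteq> 0" by simp
  qed simp
  then show ?thesis by (rule continuous_on_cong[THEN iffD1, rotated 2]) (auto simp: psi_eq)
qed

lemma psi_lim1: "(psi \<longlongrightarrow> 1/2) (at_right 1)"
proof -
  have h0: "((\<lambda>c::real. sqrt (c^2 - 1)) \<longlongrightarrow> 0) (at_right 1)"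
  proof -
    have "((\<lambda>c::real. sqrt (c^2 - 1)) \<longlongrightarrow> sqrt (1^2 - 1)) (at_right 1)"
      by (intro tendsto_intros)
    then show ?thesis by simp
  qed
  have ev: "eventually (\<lambda>c::real. 0 < sqrt (c^2 - 1)) (at_right 1)"
    unfolding eventually_at_right_field
    by (intro exI[of _ 2]) (auto simp: one_less_power)
  have "LIM c (at_right (1::real)). inverse (sqrt (c^2 - 1)) :> at_top"
    by (rule filterlim_inverse_at_top[OF h0 ev])
  from filterlim_compose[OF tendsto_arctan_at_top this]
  have "((\<lambda>c::real. arctan (inverse (sqrt (c^2 - 1)))) \<longlongrightarrow> pi/2) (at_right 1)" .
  from tendsto_diff[OF tendsto_const[of 1] tendsto_divide[OF this tendsto_const[of pi]]]
  have "((\<lambda>c::real. 1 - arctan (1 / sqrt (c^2 - 1)) / pi) \<longlongrightarrow> 1/2) (at_right 1)"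
    by (simp add: inverse_eq_divide)
  moreover have "eventually (\<lambda>c. 1 - arctan (1 / sqrt (c^2 - 1)) / pi = psi c) (at_right (1::real))"
    unfolding eventually_at_right_field by (auto intro!: exI[of _ 2] simp: psi_eq)
  ultimately show ?thesis by (rule tendsto_cong[THEN iffD1, rotated])
qed

lemma psi_lim2: "(psi \<longlongrightarrow> 1) at_top"
proof -
  have "LIM c at_top. (-1) + (c::real)^2 :> at_top"
    by (rule filterlim_tendsto_add_at_top[OF tendsto_const filterlim_pow_at_top[OF _ filterlim_ident]]) simp
  then have "LIM c at_top. (c::real)^2 - 1 :> at_top" by simp
  from filterlim_compose[OF sqrt_at_top this]
  have "LIM c at_top. sqrt ((c::real)^2 - 1) :> at_top" .
  from tendsto_inverse_0_at_top[OF this]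
  have "((\<lambda>c::real. arctan (inverse (sqrt (c^2 - 1)))) \<longlongrightarrow> arctan 0) at_top"
    by (rule tendsto_arctan)
  from tendsto_diff[OF tendsto_const[of 1] tendsto_divide[OF this tendsto_const[of pi]]]
  have "((\<lambda>c::real. 1 - arctan (1 / sqrt (c^2 - 1)) / pi) \<longlongrightarrow> 1) at_top"
    by (simp add: inverse_eq_divide)
  moreover have "eventually (\<lambda>c. 1 - arctan (1 / sqrt (c^2 - 1)) / pi = psi c) (at_top::real filter)"
    unfolding eventually_at_top_linorder by (auto intro!: exI[of _ 2] simp: psi_eq)
  ultimately show ?thesis by (rule tendsto_cong[THEN iffD1, rotated])
qed




lemma f0_ratio: "f0 y / f0 x = (1 + x^2) / (1 + y^2)"
proof -
  have "f0 y / f0 x = (pi * (1 + x^2)) / (pi * (1 + y^2))" unfolding f0_def by simp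
  also have "\<dots> = (1 + x^2) / (1 + y^2)" by simp
  finally show ?thesis .
qed

lemma ratio_iff:
  fixes c t :: real
  assumes c: "c > 1"
  shows "f0 (c / (c + 1) * t) / f0 (c / (c - 1) * t) = (c + 1) / (c - 1) \<longleftrightarrow> c^2 * t^2 = c^2 - 1"
proof -
  define u where "u = c^2 * t^2"
  have p1: "c - 1 > 0" "c + 1 > 0" using c by auto
  have c2: "c^2 - 1 > 0" using one_less_power[OF c, of 2] by simp
  have cc: "c^2 - 1 = (c - 1) * (c + 1)" by (simp add: power2_eq_square algebra_simps)
  have y: "1 + (c / (c + 1) * t)^2 > 0" by (simp add: add_pos_nonneg)
  have "f0 (c / (c + 1) * t) / f0 (c / (c - 1) * t) = (c + 1) / (c - 1)
    \<longleftrightarrow> (1 + (c / (c - 1) * t)^2) * (c - 1) = (c + 1) * (1 + (c / (c + 1) * t)^2)"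
    unfolding f0_ratio using y p1 by (simp add: frac_eq_eq)
  also have "(1 + (c / (c - 1) * t)^2) * (c - 1) = c - 1 + u / (c - 1)"
  proof -
    have sq: "(c / (c - 1) * t)^2 = u / ((c - 1) * (c - 1))"
      unfolding u_def by (simp add: power_mult_distrib power_divide power2_eq_square)
    show ?thesis unfolding sq using p1 by (simp add: distrib_right)
  qed
  also have "(c + 1) * (1 + (c / (c + 1) * t)^2) = c + 1 + u / (c + 1)"
  proof -
    have sq: "(c / (c + 1) * t)^2 = u / ((c + 1) * (c + 1))"
      unfolding u_def by (simp add: power_mult_distrib power_divide power2_eq_square)
    have "(c + 1) * (u / ((c + 1) * (c + 1))) = u / (c + 1)" using p1 by simp
    then show ?thesis unfolding sq by (simp add: distrib_left)
  qed
  also have "c - 1 + u / (c - 1) = c + 1 + u / (c + 1) \<longleftrightarrow> u / (c - 1) - u / (c + 1) = 2" by linarith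
  also have "u / (c - 1) - u / (c + 1) = 2 * u / (c^2 - 1)"
    using p1 unfolding cc by (simp add: field_simps)
  also have "2 * u / (c^2 - 1) = 2 \<longleftrightarrow> u = c^2 - 1"
  proof -
    have "2 * u / (c^2 - 1) = 2 \<longleftrightarrow> 2 * u = 2 * (c^2 - 1)" using c2 by (simp add: divide_eq_eq)
    moreover have "2 * u = 2 * (c^2 - 1) \<longleftrightarrow> u = c^2 - 1" by (rule mult_cancel_left1 | auto)
    ultimately show ?thesis by blast
  qed
  finally show ?thesis unfolding u_def .
qed

lemma part1:
  fixes c :: real
  assumes c: "c > 1"
  shows "(\<exists>!t. t > 0 \<and> f0 (c / (c + 1) * t) / f0 (c / (c - 1) * t) = (c + 1) / (c - 1))
                   \<and> theta c > 0
                   \<and> f0 (c / (c + 1) * theta c) / f0 (c / (c - 1) * theta c) = (c + 1) / (c - 1)"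
proof -
  have c2: "c^2 - 1 > 0" using one_less_power[OF c, of 2] by simp
  have tp: "theta c > 0" unfolding theta_def using c c2 by simp
  have th: "c^2 * (theta c)^2 = c^2 - 1"
    unfolding theta_def using c c2 by (simp add: power_divide)
  have eq: "f0 (c / (c + 1) * theta c) / f0 (c / (c - 1) * theta c) = (c + 1) / (c - 1)"
    using ratio_iff[OF c] th by simp
  have uniq: "t = theta c" if "t > 0" "f0 (c / (c + 1) * t) / f0 (c / (c - 1) * t) = (c + 1) / (c - 1)" for t
  proof -
    have "c^2 * t^2 = c^2 - 1" using that ratio_iff[OF c] by simp
    then have "(c * t)^2 = c^2 - 1" by (simp add: power_mult_distrib)
    then have "sqrt (c^2 - 1) = c * t" using that c by (intro real_sqrt_unique) auto
    then show ?thesis unfolding theta_def using c by simp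
  qed
  show ?thesis using tp eq uniq by blast
qed

lemma part_alpha:
  fixes \<alpha> :: real
  assumes "0 < \<alpha>" "\<alpha> < 1/2"
  shows "\<exists>c > 1. inf_coverage c = 1 - \<alpha>"
proof -
  define T where "T = tan (\<alpha> * pi)"
  have ap: "0 < \<alpha> * pi" "\<alpha> * pi < pi / 2" using assms pi_gt_zero by auto
  have Tp: "T > 0" unfolding T_def using ap by (simp add: tan_gt_zero)
  define c where "c = sqrt (1 + 1 / T^2)"
  have c2: "c^2 = 1 + 1 / T^2" unfolding c_def by (simp add: add_nonneg_nonneg)
  have c1: "c > 1" unfolding c_def using Tp by simp
  have "sqrt (c^2 - 1) = 1 / T" unfolding c2 using Tp by (simp add: real_sqrt_divide)
  then have "psi c = 1 - arctan T / pi" unfolding psi_eq[OF c1] using Tp by simp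
  also have "arctan T = \<alpha> * pi" unfolding T_def using ap pi_gt_zero by (intro arctan_tan) linarith+
  finally have "psi c = 1 - \<alpha>" by simp
  then show ?thesis using inf_cov[OF c1] c1 by auto
qed

theorem mainTheorem7:
  shows "(\<forall>c > 1. (\<exists>!t. t > 0 \<and> f0 (c / (c + 1) * t) / f0 (c / (c - 1) * t) = (c + 1) / (c - 1))
                   \<and> theta c > 0
                   \<and> f0 (c / (c + 1) * theta c) / f0 (c / (c - 1) * theta c) = (c + 1) / (c - 1))
    \<and> (\<forall>c > 1. inf_coverage c = psi c)
    \<and> continuous_on {1<..} psi
    \<and> (psi \<longlongrightarrow> 1/2) (at_right 1)
    \<and> (psi \<longlongrightarrow> 1) at_top
    \<and> (\<forall>\<alpha>::real. 0 < \<alpha> \<and> \<alpha> < 1/2 \<longrightarrow> (\<exists>c > 1. inf_coverage c = 1 - \<alpha>))"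
  using part1 inf_cov psi_cont psi_lim1 psi_lim2 part_alpha by blast


end
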